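(* (1) Let $K\ge 2$ and $N\ge K+1$, and let $F\in\mathcal F_K\setminus\mathcal F_K^{\mathrm{in}}$. If $Q\in\mathcal Q_K^{\mathrm{an}}$ contains a column $Q_{\star i}$ with $Q_{ki}>0$ for all $k\in\{1,\dots,K\}$, then there is $Q^2\in\mathcal Q_K^{\mathrm{an}}$ such that $FQ=FQ^2$ but $(F,Q)\not\sim(F,Q^2)$. (2) Let $K\ge 2$, let $F\in\mathcal F_K^{\mathrm{in}}$ and $Q\in\mathcal Q_K$, and suppose there are a column index $k_0$ and $0<\delta<1/2$ with $\delta\le F_{sk_0}\le 1-\delta$ for all $s\in\{1,\dots,M\}$. Then there are $Q^2\in\mathcal Q_K\setminus\mathcal Q_K^{\mathrm{an}}$ and $F^2\in\mathcal F_K^{\mathrm{in}}$ such that $FQ=F^2Q^2$ but $(F,Q)\not\sim(F^2,Q^2)$. Moreover $Q^2$ can be chosen so that $\{k: e_k \text{ is a column of } Q^2\}=\{k: e_k\text{ is a column of }Q\}\setminus\{k_0\}$.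
   Context: Fix positive integers $M$ and $N$. For a positive integer $K$, $\mathcal F_K$ is the set of real $M\times K$ matrices with all entries in $[0,1]$, and $\mathcal Q_K$ is the set of real $K\times N$ matrices with entries in $[0,1]$ each of whose columns sums to $1$. $e_k$ denotes the $k$-th standard basis vector of $\mathbb R^K$, and $A_{\star j}$ denotes the $j$-th column of a matrix $A$. $\mathcal Q_K^{\mathrm{an}}$ is the set of $Q\in\mathcal Q_K$ such that for every $k\in\{1,\dots,K\}$ there is $i$ with $Q_{\star i}=e_k$. $\mathcal F_K^{\mathrm{in}}$ is the set of $F\in\mathcal F_K$ such that $F_{\star 1}-F_{\star K},\dots,F_{\star K-1}-F_{\star K}$ are linearly independent. $(F^1,Q^1)\sim(F^2,Q^2)$ means $F^1,F^2$ have the same number $K$ of columns and there is a permutation $\pi$ of $\{1,\dots,K\}$ with $F^2_{sk}=F^1_{s\pi(k)}$ and $Q^2_{ki}=Q^1_{\pi(k)i}$ for all $s,k,i$. *)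

theory Defs
  imports Complex_Main
begin

text \<open>Matrices are functions nat => nat => real, indices 0-based: an M x K matrix
  A has entries A s k for s < M, k < K; only entries in range matter.\<close>

definition FK :: "nat \<Rightarrow> nat \<Rightarrow> (nat \<Rightarrow> nat \<Rightarrow> real) set" where
  "FK M K = {F. \<forall>s<M. \<forall>k<K. 0 \<le> F s k \<and> F s k \<le> 1}"

definition QK :: "nat \<Rightarrow> nat \<Rightarrow> (nat \<Rightarrow> nat \<Rightarrow> real) set" where
  "QK K N = {Q. (\<forall>k<K. \<forall>i<N. 0 \<le> Q k i \<and> Q k i \<le> 1) \<and>
                (\<forall>i<N. (\<Sum>k<K. Q k i) = 1)}"

definition col_is_e :: "nat \<Rightarrow> (nat \<Rightarrow> nat \<Rightarrow> real) \<Rightarrow> nat \<Rightarrow> nat \<Rightarrow> bool" where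
  "col_is_e K Q i k = (\<forall>k'<K. Q k' i = (if k' = k then 1 else 0))"

definition QK_an :: "nat \<Rightarrow> nat \<Rightarrow> (nat \<Rightarrow> nat \<Rightarrow> real) set" where
  "QK_an K N = {Q \<in> QK K N. \<forall>k<K. \<exists>i<N. col_is_e K Q i k}"

text \<open>Linear independence of the columns F_k - F_K (k = 1..K-1), i.e. here
  (0-based) F_k - F_{K-1} for k < K-1, as vectors in R^M.\<close>
definition FK_in :: "nat \<Rightarrow> nat \<Rightarrow> (nat \<Rightarrow> nat \<Rightarrow> real) set" where
  "FK_in M K = {F \<in> FK M K. \<forall>c :: nat \<Rightarrow> real.
      (\<forall>s<M. (\<Sum>k<K-1. c k * (F s k - F s (K-1))) = 0) \<longrightarrow> (\<forall>k<K-1. c k = 0)}"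

definition prod_eq :: "nat \<Rightarrow> nat \<Rightarrow> nat \<Rightarrow> (nat \<Rightarrow> nat \<Rightarrow> real) \<Rightarrow> (nat \<Rightarrow> nat \<Rightarrow> real)
    \<Rightarrow> (nat \<Rightarrow> nat \<Rightarrow> real) \<Rightarrow> (nat \<Rightarrow> nat \<Rightarrow> real) \<Rightarrow> bool" where
  "prod_eq M K N F1 Q1 F2 Q2 = (\<forall>s<M. \<forall>i<N. (\<Sum>k<K. F1 s k * Q1 k i) = (\<Sum>k<K. F2 s k * Q2 k i))"

definition perm_equiv :: "nat \<Rightarrow> nat \<Rightarrow> nat \<Rightarrow> (nat \<Rightarrow> nat \<Rightarrow> real) \<Rightarrow> (nat \<Rightarrow> nat \<Rightarrow> real)
    \<Rightarrow> (nat \<Rightarrow> nat \<Rightarrow> real) \<Rightarrow> (nat \<Rightarrow> nat \<Rightarrow> real) \<Rightarrow> bool" where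
  "perm_equiv M K N F1 Q1 F2 Q2 = (\<exists>\<pi>. bij_betw \<pi> {..<K} {..<K} \<and>
      (\<forall>s<M. \<forall>k<K. F2 s k = F1 s (\<pi> k)) \<and> (\<forall>k<K. \<forall>i<N. Q2 k i = Q1 (\<pi> k) i))"

end

theory Submission
  imports Defs
begin

lemma FK_in_iff:
  assumes "K \<ge> 1"
  shows "F \<in> FK_in M K \<longleftrightarrow> F \<in> FK M K \<and> (\<forall>a. (\<Sum>k<K. a k) = 0 \<and> (\<forall>s<M. (\<Sum>k<K. a k * F s k) = 0) \<longrightarrow> (\<forall>k<K. a k = (0::real)))"
proof -
  obtain n where K: "K = Suc n" using assms by (cases K) auto
  have eq: "(\<Sum>k<n. c k * (F s k - F s n)) = (\<Sum>k<n. c k * F s k) - (\<Sum>k<n. c k) * F s n" for c s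
    by (simp add: algebra_simps sum_subtractf sum_distrib_right sum_distrib_left)
  show ?thesis
  proof
    assume F: "F \<in> FK_in M K"
    show "F \<in> FK M K \<and> (\<forall>a. (\<Sum>k<K. a k) = 0 \<and> (\<forall>s<M. (\<Sum>k<K. a k * F s k) = 0) \<longrightarrow> (\<forall>k<K. a k = 0))"
    proof (intro conjI allI impI)
      show "F \<in> FK M K" using F by (simp add: FK_in_def)
      fix a :: "nat \<Rightarrow> real" and k
      assume h: "(\<Sum>k<K. a k) = 0 \<and> (\<forall>s<M. (\<Sum>k<K. a k * F s k) = 0)" and k: "k < K"
      have an: "a n = - (\<Sum>k<n. a k)" using h K by simp
      have "\<forall>s<M. (\<Sum>k<n. a k * (F s k - F s n)) = 0"
      proof (intro allI impI)
        fix s assume "s < M"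
        then have "(\<Sum>k<Suc n. a k * F s k) = 0" using h K by simp
        then show "(\<Sum>k<n. a k * (F s k - F s n)) = 0" unfolding eq using an by (simp add: algebra_simps)
      qed
      then have z: "\<forall>k<n. a k = 0" using F K by (simp add: FK_in_def)
      show "a k = 0"
      proof (cases "k < n")
        case True then show ?thesis using z by simp
      next
        case False then have "k = n" using k K by simp
        then show ?thesis using an z by simp
      qed
    qed
  next
    assume F: "F \<in> FK M K \<and> (\<forall>a. (\<Sum>k<K. a k) = 0 \<and> (\<forall>s<M. (\<Sum>k<K. a k * F s k) = 0) \<longrightarrow> (\<forall>k<K. a k = 0))"
    show "F \<in> FK_in M K" unfolding FK_in_def
    proof (intro CollectI conjI allI impI)
      show "F \<in> FK M K" using F by simp
      fix c :: "nat \<Rightarrow> real" and k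
      assume h: "\<forall>s<M. (\<Sum>k<K - 1. c k * (F s k - F s (K - 1))) = 0" and k: "k < K - 1"
      define a where "a = c(n := - (\<Sum>k<n. c k))"
      have an: "\<And>k. k < n \<Longrightarrow> a k = c k" by (simp add: a_def)
      have s1: "(\<Sum>k<n. a k) = (\<Sum>k<n. c k)" by (rule sum.cong) (auto simp: an)
      have s2: "(\<Sum>k<n. a k * F s k) = (\<Sum>k<n. c k * F s k)" for s by (rule sum.cong) (auto simp: an)
      have "(\<Sum>k<K. a k) = 0" using K s1 by (simp add: a_def)
      moreover have "\<forall>s<M. (\<Sum>k<K. a k * F s k) = 0"
      proof (intro allI impI)
        fix s assume "s < M"
        then have "(\<Sum>k<n. c k * (F s k - F s n)) = 0" using h K by simp
        then show "(\<Sum>k<K. a k * F s k) = 0" unfolding eq using K s2 by (simp add: a_def algebra_simps)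
      qed
      ultimately have "\<forall>k<K. a k = 0" using F by blast
      then show "c k = 0" using k K an by auto
    qed
  qed
qed

lemma anchor_not_pos:
  assumes "K \<ge> 2" "col_is_e K Q i k" "k < K" "\<forall>k<K. Q k i0 > 0"
  shows "i \<noteq> i0"
proof
  assume "i = i0"
  define k' where "k' = (if k = 0 then 1 else 0::nat)"
  have "k' < K" "k' \<noteq> k" using assms by (auto simp: k'_def)
  then have "Q k' i = 0" using assms(2) by (simp add: col_is_e_def)
  then show False using assms(4) \<open>k' < K\<close> \<open>i = i0\<close> by force
qed

lemma part1:
  assumes K2: "K \<ge> 2" and F: "F \<in> FK M K - FK_in M K" and Q: "Q \<in> QK_an K N"
    and i0: "i0 < N" and pos: "\<forall>k<K. Q k i0 > 0"
  shows "\<exists>Q2 \<in> QK_an K N. prod_eq M K N F Q F Q2 \<and> \<not> perm_equiv M K N F Q F Q2"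
proof -
  have "\<not> (\<forall>a. (\<Sum>k<K. a k) = 0 \<and> (\<forall>s<M. (\<Sum>k<K. a k * F s k) = 0) \<longrightarrow> (\<forall>k<K. a k = (0::real)))"
    using F FK_in_iff[of K F M] K2 by auto
  then obtain a k1 where asum: "(\<Sum>k<K. a k) = (0::real)" and aF: "\<forall>s<M. (\<Sum>k<K. a k * F s k) = 0"
    and k1: "k1 < K" "a k1 \<noteq> 0" by blast
  have QK: "Q \<in> QK K N" and anch: "\<forall>k<K. \<exists>i<N. col_is_e K Q i k" using Q by (auto simp: QK_an_def)
  have Qnn: "\<And>k i. k < K \<Longrightarrow> i < N \<Longrightarrow> 0 \<le> Q k i" and Qsum: "\<And>i. i < N \<Longrightarrow> (\<Sum>k<K. Q k i) = 1"
    using QK by (auto simp: QK_def)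
  define m where "m = Min ((\<lambda>k. Q k i0) ` {..<K})"
  have ne: "(\<lambda>k. Q k i0) ` {..<K} \<noteq> {}" using K2 by (auto simp: lessThan_empty_iff)
  have mpos: "m > 0" unfolding m_def using ne pos by (subst Min_gr_iff) auto
  have mle: "\<And>k. k < K \<Longrightarrow> m \<le> Q k i0" unfolding m_def by (rule Min_le) auto
  define S where "S = (\<Sum>k<K. \<bar>a k\<bar>)"
  have Snn: "S \<ge> 0" unfolding S_def by (simp add: sum_nonneg)
  have aS: "\<And>k. k < K \<Longrightarrow> \<bar>a k\<bar> \<le> S" unfolding S_def
    by (rule member_le_sum) auto
  define t where "t = m / (1 + S)"
  have tpos: "t > 0" using mpos Snn by (simp add: t_def)
  have tb: "t * \<bar>a k\<bar> \<le> Q k i0" if "k < K" for k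
  proof -
    have "t * \<bar>a k\<bar> \<le> t * S" using aS[OF that] tpos by (simp add: mult_left_mono)
    also have "\<dots> = m * (S / (1 + S))" by (simp add: t_def)
    also have "\<dots> \<le> m * 1" using mpos Snn by (intro mult_left_mono) auto
    finally show ?thesis using mle[OF that] by simp
  qed
  define Q2 where "Q2 = (\<lambda>k i. if i = i0 then Q k i + t * a k else Q k i)"
  have Q2nn: "0 \<le> Q2 k i" if "k < K" "i < N" for k i
  proof (cases "i = i0")
    case True
    have "- (t * \<bar>a k\<bar>) \<le> t * a k" using tpos by (metis abs_ge_minus_self abs_mult abs_of_pos minus_le_iff) 
    then show ?thesis using tb[OF that(1)] True by (simp add: Q2_def)
  qed (use Qnn that in \<open>simp add: Q2_def\<close>)
  have Q2sum: "(\<Sum>k<K. Q2 k i) = 1" if "i < N" for i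
  proof (cases "i = i0")
    case True
    have "(\<Sum>k<K. Q2 k i) = (\<Sum>k<K. Q k i) + t * (\<Sum>k<K. a k)"
      using True by (simp add: Q2_def sum.distrib sum_distrib_left)
    then show ?thesis using asum Qsum[OF that] by simp
  qed (use Qsum that in \<open>simp add: Q2_def\<close>)
  have Q2le: "Q2 k i \<le> 1" if "k < K" "i < N" for k i
  proof -
    have "Q2 k i \<le> (\<Sum>k<K. Q2 k i)" using that Q2nn by (intro member_le_sum) auto
    then show ?thesis using Q2sum[OF that(2)] by simp
  qed
  have anchne: "col_is_e K Q i k \<Longrightarrow> k < K \<Longrightarrow> i \<noteq> i0" for i k
    using anchor_not_pos[of K Q i k i0] K2 pos by blast
  have Q2an: "Q2 \<in> QK_an K N"
    unfolding QK_an_def QK_def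
  proof (intro CollectI conjI allI impI)
    fix k assume k: "k < K"
    then obtain i where i: "i < N" "col_is_e K Q i k" using anch by blast
    then have "i \<noteq> i0" using anchne k by blast
    then have "col_is_e K Q2 i k" using i by (simp add: col_is_e_def Q2_def)
    then show "\<exists>i<N. col_is_e K Q2 i k" using i by blast
  qed (use Q2nn Q2le Q2sum in auto)
  have peq: "prod_eq M K N F Q F Q2"
    unfolding prod_eq_def
  proof (intro allI impI)
    fix s i assume s: "s < M" and i: "i < N"
    show "(\<Sum>k<K. F s k * Q k i) = (\<Sum>k<K. F s k * Q2 k i)"
    proof (cases "i = i0")
      case True
      have "(\<Sum>k<K. F s k * Q2 k i) = (\<Sum>k<K. F s k * Q k i) + t * (\<Sum>k<K. a k * F s k)"
        using True by (simp add: Q2_def sum.distrib sum_distrib_left algebra_simps)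
      then show ?thesis using aF s by simp
    qed (simp add: Q2_def)
  qed
  have npe: "\<not> perm_equiv M K N F Q F Q2"
  proof
    assume "perm_equiv M K N F Q F Q2"
    then obtain \<pi> where bij: "bij_betw \<pi> {..<K} {..<K}" and qq: "\<forall>k<K. \<forall>i<N. Q2 k i = Q (\<pi> k) i"
      unfolding perm_equiv_def by blast
    have pid: "\<pi> k = k" if k: "k < K" for k
    proof -
      obtain i where i: "i < N" "col_is_e K Q i k" using anch k by blast
      then have "i \<noteq> i0" using anchne k by blast
      then have "Q2 k i = 1" using i k by (simp add: col_is_e_def Q2_def)
      moreover have "\<pi> k < K" using bij k by (auto simp: bij_betw_def)
      ultimately have "Q (\<pi> k) i = 1" using qq k i by simp
      then show ?thesis using i(2) \<open>\<pi> k < K\<close> by (auto simp: col_is_e_def split: if_splits)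
    qed
    have "Q2 k1 i0 = Q k1 i0" using qq pid k1 i0 by simp
    then show False using tpos k1 by (simp add: Q2_def)
  qed
  show ?thesis using Q2an peq npe by blast
qed

lemma sum_split2:
  fixes K j k0 :: nat and f g :: "nat \<Rightarrow> real"
  assumes "j \<noteq> k0" "j < K" "k0 < K"
  shows "(\<Sum>k<K. f k) = f k0 + f j + (\<Sum>k\<in>{..<K} - {k0, j}. f k)"
proof -
  have "(\<Sum>k<K. f k) = f k0 + (\<Sum>k\<in>{..<K} - {k0}. f k)"
    using sum.remove[of "{..<K}" k0 f] assms(3) by simp
  also have "(\<Sum>k\<in>{..<K} - {k0}. f k) = f j + (\<Sum>k\<in>{..<K} - {k0} - {j}. f k)"
    using sum.remove[of "{..<K} - {k0}" j f] assms(1,2) by simp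
  also have "{..<K} - {k0} - {j} = {..<K} - {k0, j}" by auto
  finally show ?thesis by linarith
qed

lemma sum_split2_cong:
  fixes K j k0 :: nat and f g :: "nat \<Rightarrow> real"
  assumes "j \<noteq> k0" "j < K" "k0 < K"
    and "\<And>k. k < K \<Longrightarrow> k \<noteq> k0 \<Longrightarrow> k \<noteq> j \<Longrightarrow> f k = g k"
    and "f k0 + f j = g k0 + g j"
  shows "(\<Sum>k<K. f k) = (\<Sum>k<K. g k)"
proof -
  have "(\<Sum>k\<in>{..<K} - {k0, j}. f k) = (\<Sum>k\<in>{..<K} - {k0, j}. g k)"
    using assms(4) by (intro sum.cong) auto
  moreover note sum_split2[OF assms(1-3), of f] sum_split2[OF assms(1-3), of g]
  ultimately show ?thesis using assms(5) by linarith
qed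

lemma part2:
  assumes K2: "K \<ge> 2" and F: "F \<in> FK_in M K" and Q: "Q \<in> QK K N" and k0: "k0 < K"
    and d0: "0 < \<delta>" and d1: "\<delta> < 1/2" and Fb: "\<forall>s<M. \<delta> \<le> F s k0 \<and> F s k0 \<le> 1 - \<delta>"
  shows "\<exists>Q2 F2. Q2 \<in> QK K N - QK_an K N \<and> F2 \<in> FK_in M K \<and>
         prod_eq M K N F Q F2 Q2 \<and> \<not> perm_equiv M K N F Q F2 Q2 \<and>
         {k. k < K \<and> (\<exists>i<N. col_is_e K Q2 i k)} =
           {k. k < K \<and> (\<exists>i<N. col_is_e K Q i k)} - {k0}"
proof -
  define j where "j = (if k0 = 0 then 1 else (0::nat))"
  have j: "j < K" "j \<noteq> k0" using K2 by (auto simp: j_def)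
  have FK: "F \<in> FK M K" using F by (simp add: FK_in_def)
  have Fnn: "\<And>s k. s < M \<Longrightarrow> k < K \<Longrightarrow> 0 \<le> F s k \<and> F s k \<le> 1" using FK by (simp add: FK_def)
  have Fai: "\<forall>a. (\<Sum>k<K. a k) = 0 \<and> (\<forall>s<M. (\<Sum>k<K. a k * F s k) = 0) \<longrightarrow> (\<forall>k<K. a k = (0::real))"
    using F FK_in_iff[of K F M] K2 by auto
  have Qnn: "\<And>k i. k < K \<Longrightarrow> i < N \<Longrightarrow> 0 \<le> Q k i" and Qsum: "\<And>i. i < N \<Longrightarrow> (\<Sum>k<K. Q k i) = 1"
    using Q by (auto simp: QK_def)
  define G where "G = (\<lambda>s. (F s k0 - \<delta> * F s j) / (1 - \<delta>))"
  define F2 where "F2 = (\<lambda>s k. if k = k0 then G s else F s k)"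
  define Q2 where "Q2 = (\<lambda>k i. if k = k0 then (1 - \<delta>) * Q k0 i else if k = j then Q j i + \<delta> * Q k0 i else Q k i)"
  have d1': "\<delta> < 1" using d1 by simp
  have dn1: "\<delta> \<noteq> 1" "1 - \<delta> \<noteq> 0" using d1 by auto
  have Gb: "0 \<le> G s \<and> G s \<le> 1" if s: "s < M" for s
  proof -
    have a: "\<delta> \<le> F s k0" "F s k0 \<le> 1 - \<delta>" using Fb s by auto
    have b: "0 \<le> F s j" "F s j \<le> 1" using Fnn[OF s j(1)] by auto
    have "\<delta> * F s j \<le> \<delta>" using b d0 by (simp add: mult_left_le)
    moreover have "0 \<le> \<delta> * F s j" using b d0 by simp
    ultimately show ?thesis using a d1' by (simp add: G_def divide_simps)
  qed
  have F2FK: "F2 \<in> FK M K" using Gb Fnn by (auto simp: FK_def F2_def)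
  have F2ai: "\<forall>a. (\<Sum>k<K. a k) = 0 \<and> (\<forall>s<M. (\<Sum>k<K. a k * F2 s k) = 0) \<longrightarrow> (\<forall>k<K. a k = (0::real))"
  proof (intro allI impI)
    fix a :: "nat \<Rightarrow> real" and k
    assume h: "(\<Sum>k<K. a k) = 0 \<and> (\<forall>s<M. (\<Sum>k<K. a k * F2 s k) = 0)" and k: "k < K"
    define b where "b = (\<lambda>k. if k = k0 then a k0 / (1 - \<delta>) else if k = j then a j - \<delta> * a k0 / (1 - \<delta>) else a k)"
    have "(\<Sum>k<K. b k) = (\<Sum>k<K. a k)"
    proof (rule sum_split2_cong[OF j(2,1) k0])
      have ne: "1 - \<delta> \<noteq> 0" using d1' by simp
      have "a k0 / (1 - \<delta>) - \<delta> * a k0 / (1 - \<delta>) = (1 - \<delta>) * a k0 / (1 - \<delta>)"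
        by (simp add: diff_divide_distrib[symmetric] algebra_simps)
      also have "\<dots> = a k0" using ne by simp
      finally show "b k0 + b j = a k0 + a j" using j(2) by (simp add: b_def)
    qed (simp add: b_def)
    moreover have "(\<Sum>k<K. b k * F s k) = (\<Sum>k<K. a k * F2 s k)" for s
    proof (rule sum_split2_cong[OF j(2,1) k0])
      show "b k0 * F s k0 + b j * F s j = a k0 * F2 s k0 + a j * F2 s j"
      proof -
        define u where "u = a k0 / (1 - \<delta>)"
        have bk0: "b k0 = u" by (simp add: b_def u_def)
        have bj: "b j = a j - \<delta> * u" using j(2) by (simp add: b_def u_def)
        have "a k0 * F2 s k0 = u * (F s k0 - \<delta> * F s j)"
          by (simp add: F2_def G_def u_def)
        moreover have "F2 s j = F s j" using j(2) by (simp add: F2_def)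
        moreover have aj: "a j = b j + \<delta> * u" using bj by simp
        ultimately show ?thesis unfolding aj bk0 by (simp add: algebra_simps)
      qed
    qed (simp add: b_def F2_def)
    ultimately have "\<forall>k<K. b k = 0" using Fai h by auto
    then have "b k0 = 0" "b j = 0" "\<forall>k<K. k \<noteq> k0 \<longrightarrow> k \<noteq> j \<longrightarrow> b k = 0" using k0 j by auto
    then show "a k = 0" using d1' j k by (auto simp: b_def split: if_splits)
  qed
  have F2in: "F2 \<in> FK_in M K" using F2FK F2ai FK_in_iff[of K F2 M] K2 by auto
  have Q2sum: "(\<Sum>k<K. Q2 k i) = (\<Sum>k<K. Q k i)" for i
  proof (rule sum_split2_cong[OF j(2,1) k0])
    show "Q2 k0 i + Q2 j i = Q k0 i + Q j i" using j(2) by (simp add: Q2_def algebra_simps)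
  qed (simp add: Q2_def)
  have Q2nn: "0 \<le> Q2 k i" if "k < K" "i < N" for k i
    using Qnn[OF that] Qnn[OF k0 that(2)] d1' d0 by (auto simp: Q2_def)
  have Q2le: "Q2 k i \<le> 1" if "k < K" "i < N" for k i
  proof -
    have "Q2 k i \<le> (\<Sum>k<K. Q2 k i)" using that Q2nn by (intro member_le_sum) auto
    then show ?thesis using Q2sum Qsum[OF that(2)] by simp
  qed
  have Q2QK: "Q2 \<in> QK K N" using Q2nn Q2le Q2sum Qsum by (auto simp: QK_def)
  have anc: "col_is_e K Q2 i k \<longleftrightarrow> col_is_e K Q i k \<and> k \<noteq> k0" if k: "k < K" and i: "i < N" for i k
  proof
    assume c: "col_is_e K Q2 i k"
    have q0: "Q k0 i \<le> 1" using Q k0 i by (auto simp: QK_def)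
    have "Q2 k0 i = (if k0 = k then 1 else 0)" using c k0 by (simp add: col_is_e_def)
    moreover have "Q2 k0 i \<noteq> 1"
    proof -
      have "(1 - \<delta>) * Q k0 i \<le> (1 - \<delta>) * 1" using q0 d1' by (intro mult_left_mono) auto
      then show ?thesis using d0 by (simp add: Q2_def)
    qed
    ultimately have kk: "k \<noteq> k0" and z: "Q2 k0 i = 0" by (auto split: if_splits)
    then have "Q k0 i = 0" using d1' by (simp add: Q2_def)
    then have "\<forall>k'<K. Q2 k' i = Q k' i" by (simp add: Q2_def)
    then show "col_is_e K Q i k \<and> k \<noteq> k0" using c kk by (simp add: col_is_e_def)
  next
    assume c: "col_is_e K Q i k \<and> k \<noteq> k0"
    then have "Q k0 i = 0" using k0 by (simp add: col_is_e_def)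
    then have "\<forall>k'<K. Q2 k' i = Q k' i" by (simp add: Q2_def)
    then show "col_is_e K Q2 i k" using c by (simp add: col_is_e_def)
  qed
  have aset: "{k. k < K \<and> (\<exists>i<N. col_is_e K Q2 i k)} = {k. k < K \<and> (\<exists>i<N. col_is_e K Q i k)} - {k0}"
    using anc by auto
  have notan: "Q2 \<notin> QK_an K N"
  proof
    assume "Q2 \<in> QK_an K N"
    then obtain i where "i < N" "col_is_e K Q2 i k0" using k0 by (auto simp: QK_an_def)
    then show False using anc k0 by blast
  qed
  have peq: "prod_eq M K N F Q F2 Q2"
    unfolding prod_eq_def
  proof (intro allI impI)
    fix s i assume s: "s < M" and i: "i < N"
    show "(\<Sum>k<K. F s k * Q k i) = (\<Sum>k<K. F2 s k * Q2 k i)"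
    proof (rule sum_split2_cong[OF j(2,1) k0])
      show "F s k0 * Q k0 i + F s j * Q j i = F2 s k0 * Q2 k0 i + F2 s j * Q2 j i"
        using dn1 j(2) by (simp add: F2_def Q2_def G_def field_simps)
    qed (simp add: F2_def Q2_def)
  qed
  have dist: "a = b" if "a < K" "b < K" "\<forall>s<M. F s a = F s b" for a b
  proof (rule ccontr)
    assume ab: "a \<noteq> b"
    define c where "c = (\<lambda>k. if k = a then 1 else if k = b then -1 else (0::real))"
    have ba: "b \<noteq> a" using ab by simp
    have "(\<Sum>k<K. c k) = c a + c b + (\<Sum>k\<in>{..<K} - {a, b}. c k)"
      using sum_split2[OF ba that(2,1)] .
    also have "(\<Sum>k\<in>{..<K} - {a, b}. c k) = 0" by (intro sum.neutral) (auto simp: c_def)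
    finally have "(\<Sum>k<K. c k) = 0" using ab by (simp add: c_def)
    moreover have "\<forall>s<M. (\<Sum>k<K. c k * F s k) = 0"
    proof (intro allI impI)
      fix s assume s: "s < M"
      have "(\<Sum>k<K. c k * F s k) = c a * F s a + c b * F s b + (\<Sum>k\<in>{..<K} - {a, b}. c k * F s k)"
        using sum_split2[OF ba that(2,1)] .
      also have "(\<Sum>k\<in>{..<K} - {a, b}. c k * F s k) = 0" by (intro sum.neutral) (auto simp: c_def)
      finally show "(\<Sum>k<K. c k * F s k) = 0" using ab that(3) s by (simp add: c_def)
    qed
    ultimately have "c a = 0" using Fai that by blast
    then show False by (simp add: c_def)
  qed
  have npe: "\<not> perm_equiv M K N F Q F2 Q2"
  proof
    assume "perm_equiv M K N F Q F2 Q2"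
    then obtain \<pi> where bij: "bij_betw \<pi> {..<K} {..<K}" and ff: "\<forall>s<M. \<forall>k<K. F2 s k = F s (\<pi> k)"
      unfolding perm_equiv_def by blast
    have pk: "\<pi> k < K" if "k < K" for k using bij that by (auto simp: bij_betw_def)
    have pid: "\<pi> k = k" if "k < K" "k \<noteq> k0" for k
    proof -
      have "\<forall>s<M. F s (\<pi> k) = F s k" using ff that by (metis F2_def)
      then show ?thesis using dist[OF pk[OF that(1)] that(1)] by blast
    qed
    have "\<pi> k0 = k0"
    proof (rule ccontr)
      assume "\<pi> k0 \<noteq> k0"
      then have "\<pi> (\<pi> k0) = \<pi> k0" using pid pk k0 by blast
      moreover have "inj_on \<pi> {..<K}" using bij by (simp add: bij_betw_def)
      ultimately show False using \<open>\<pi> k0 \<noteq> k0\<close> pk k0 by (meson inj_onD lessThan_iff)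
    qed
    then have "\<forall>s<M. G s = F s k0" using ff k0 by (metis F2_def)
    then have "\<forall>s<M. F s k0 = F s j" using d0 dn1 by (simp add: G_def field_simps)
    then show False using dist[OF k0 j(1)] j(2) by simp
  qed
  show ?thesis using Q2QK notan F2in peq npe aset by blast
qed

theorem mainTheorem2:
  fixes M N :: nat
  assumes "M > 0" and "N > 0"
  shows
   "(\<forall>K F Q. K \<ge> 2 \<and> N \<ge> K + 1 \<and> F \<in> FK M K - FK_in M K \<and> Q \<in> QK_an K N \<and>
        (\<exists>i<N. \<forall>k<K. Q k i > 0) \<longrightarrow>
      (\<exists>Q2 \<in> QK_an K N. prod_eq M K N F Q F Q2 \<and> \<not> perm_equiv M K N F Q F Q2))
  \<and>
   (\<forall>K F Q k0 (\<delta>::real). K \<ge> 2 \<and> F \<in> FK_in M K \<and> Q \<in> QK K N \<and> k0 < K \<and>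
        0 < \<delta> \<and> \<delta> < 1/2 \<and> (\<forall>s<M. \<delta> \<le> F s k0 \<and> F s k0 \<le> 1 - \<delta>) \<longrightarrow>
      (\<exists>Q2 F2. Q2 \<in> QK K N - QK_an K N \<and> F2 \<in> FK_in M K \<and>
         prod_eq M K N F Q F2 Q2 \<and> \<not> perm_equiv M K N F Q F2 Q2 \<and>
         {k. k < K \<and> (\<exists>i<N. col_is_e K Q2 i k)} =
           {k. k < K \<and> (\<exists>i<N. col_is_e K Q i k)} - {k0}))"
proof (intro conjI allI impI)
  fix K F Q
  assume h: "K \<ge> 2 \<and> N \<ge> K + 1 \<and> F \<in> FK M K - FK_in M K \<and> Q \<in> QK_an K N \<and>
        (\<exists>i<N. \<forall>k<K. Q k i > 0)"
  then obtain i0 where "i0 < N" "\<forall>k<K. Q k i0 > 0" by blast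
  then show "\<exists>Q2 \<in> QK_an K N. prod_eq M K N F Q F Q2 \<and> \<not> perm_equiv M K N F Q F Q2"
    using part1[of K F M Q N i0] h by blast
next
  fix K F Q k0 and \<delta> :: real
  assume h: "K \<ge> 2 \<and> F \<in> FK_in M K \<and> Q \<in> QK K N \<and> k0 < K \<and>
        0 < \<delta> \<and> \<delta> < 1/2 \<and> (\<forall>s<M. \<delta> \<le> F s k0 \<and> F s k0 \<le> 1 - \<delta>)"
  then show "\<exists>Q2 F2. Q2 \<in> QK K N - QK_an K N \<and> F2 \<in> FK_in M K \<and>
         prod_eq M K N F Q F2 Q2 \<and> \<not> perm_equiv M K N F Q F2 Q2 \<and>
         {k. k < K \<and> (\<exists>i<N. col_is_e K Q2 i k)} =
           {k. k < K \<and> (\<exists>i<N. col_is_e K Q i k)} - {k0}"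
    using part2[of K F M Q N k0 \<delta>] by blast
qed

end
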